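(* Let $\mathcal{G}$ be a simple MAG with a given topological ordering of its vertices. Let $i$ be a vertex and let $\{i,j_1\},\dots,\{i,j_k\}$ be all heads of size two containing $i$ whose other element precedes $i$, ordered so that $j_1<\dots<j_k<i$. Then $$\mathrm{pa}(i)=\mathrm{tail}(\{i\})\subseteq\mathrm{tail}(\{i,j_1\})\subseteq\cdots\subseteq\mathrm{tail}(\{i,j_k\}).$$
   Context: A MAG is an acyclic directed mixed graph (directed and bidirected edges, no directed cycles) with $\mathrm{sib}(v)\cap\mathrm{an}(v)=\emptyset$ for all $v$ and in which every nonadjacent pair of vertices is m-separated by some set. A topological ordering is an ordering of the vertices in which every ancestor of $v$ precedes $v$. $\mathrm{barren}(W)=\{w\in W:\mathrm{de}(w)\cap W=\{w\}\}$; a nonempty set $H$ is a head if $\mathrm{barren}(H)=H$ and $H$ lies in a single district (bidirected-connected component) of the induced subgraph $\mathcal{G}_{\mathrm{an}(H)}$; $\mathrm{tail}(H)=(\mathrm{dis}_{\mathrm{an}(H)}(H)\setminus H)\cup\mathrm{pa}(\mathrm{dis}_{\mathrm{an}(H)}(H))$, where $\mathrm{dis}_{\mathrm{an}(H)}(H)$ is the district of $\mathcal{G}_{\mathrm{an}(H)}$ containing $H$. A MAG is simple if it has no head with more than two elements. *)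

theory Defs
  imports Main
begin

text \<open>A mixed graph on a finite vertex set V with directed edges D
 ((u,v) \<in> D means u \<rightarrow> v) and bidirected edges B (symmetric, (u,v) \<in> B means u \<leftrightarrow> v).\<close>

definition pa :: "('a \<times> 'a) set \<Rightarrow> 'a \<Rightarrow> 'a set" where
  "pa D v = {u. (u, v) \<in> D}"

definition paS :: "('a \<times> 'a) set \<Rightarrow> 'a set \<Rightarrow> 'a set" where
  "paS D S = (\<Union>v\<in>S. pa D v)"

text \<open>ancestors / descendants include the vertex itself\<close>
definition an :: "('a \<times> 'a) set \<Rightarrow> 'a \<Rightarrow> 'a set" where
  "an D v = {u. (u, v) \<in> D\<^sup>*}"

definition anS :: "('a \<times> 'a) set \<Rightarrow> 'a set \<Rightarrow> 'a set" where
  "anS D S = (\<Union>v\<in>S. an D v)"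

definition de :: "('a \<times> 'a) set \<Rightarrow> 'a \<Rightarrow> 'a set" where
  "de D v = {w. (v, w) \<in> D\<^sup>*}"

definition sib :: "('a \<times> 'a) set \<Rightarrow> 'a \<Rightarrow> 'a set" where
  "sib B v = {u. (u, v) \<in> B}"

definition mixed_graph :: "'a set \<Rightarrow> ('a \<times> 'a) set \<Rightarrow> ('a \<times> 'a) set \<Rightarrow> bool" where
  "mixed_graph V D B \<longleftrightarrow> finite V \<and> D \<subseteq> V \<times> V \<and> B \<subseteq> V \<times> V \<and> sym B
     \<and> (\<forall>v. (v, v) \<notin> B)"

definition acyclic_dir :: "('a \<times> 'a) set \<Rightarrow> bool" where
  "acyclic_dir D \<longleftrightarrow> (\<forall>v. (v, v) \<notin> D\<^sup>+)"

definition ancestral :: "'a set \<Rightarrow> ('a \<times> 'a) set \<Rightarrow> ('a \<times> 'a) set \<Rightarrow> bool" where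
  "ancestral V D B \<longleftrightarrow> (\<forall>v\<in>V. sib B v \<inter> an D v = {})"

definition adjacent :: "('a \<times> 'a) set \<Rightarrow> ('a \<times> 'a) set \<Rightarrow> 'a \<Rightarrow> 'a \<Rightarrow> bool" where
  "adjacent D B u v \<longleftrightarrow> (u, v) \<in> D \<or> (v, u) \<in> D \<or> (u, v) \<in> B"

definition arrowhead_at :: "('a \<times> 'a) set \<Rightarrow> ('a \<times> 'a) set \<Rightarrow> 'a \<Rightarrow> 'a \<Rightarrow> bool" where
  "arrowhead_at D B u v \<longleftrightarrow> (u, v) \<in> D \<or> (u, v) \<in> B"

text \<open>A path given by its (distinct) vertex sequence; in an ancestral acyclic graph
 any two vertices are joined by at most one edge, so this determines the edges.\<close>
definition is_path :: "'a set \<Rightarrow> ('a \<times> 'a) set \<Rightarrow> ('a \<times> 'a) set \<Rightarrow> 'a list \<Rightarrow> bool" where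
  "is_path V D B ps \<longleftrightarrow> length ps \<ge> 2 \<and> distinct ps \<and> set ps \<subseteq> V
     \<and> (\<forall>k. Suc k < length ps \<longrightarrow> adjacent D B (ps ! k) (ps ! Suc k))"

definition collider :: "('a \<times> 'a) set \<Rightarrow> ('a \<times> 'a) set \<Rightarrow> 'a list \<Rightarrow> nat \<Rightarrow> bool" where
  "collider D B ps k \<longleftrightarrow> 0 < k \<and> Suc k < length ps
     \<and> arrowhead_at D B (ps ! (k - 1)) (ps ! k) \<and> arrowhead_at D B (ps ! Suc k) (ps ! k)"

definition m_connecting :: "'a set \<Rightarrow> ('a \<times> 'a) set \<Rightarrow> ('a \<times> 'a) set \<Rightarrow> 'a set \<Rightarrow> 'a list \<Rightarrow> bool" where
  "m_connecting V D B Z ps \<longleftrightarrow> is_path V D B ps \<and> hd ps \<notin> Z \<and> last ps \<notin> Z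
     \<and> (\<forall>k. 0 < k \<and> Suc k < length ps \<longrightarrow>
          (collider D B ps k \<longrightarrow> ps ! k \<in> anS D Z)
        \<and> (\<not> collider D B ps k \<longrightarrow> ps ! k \<notin> Z))"

definition m_separated :: "'a set \<Rightarrow> ('a \<times> 'a) set \<Rightarrow> ('a \<times> 'a) set \<Rightarrow> 'a \<Rightarrow> 'a \<Rightarrow> 'a set \<Rightarrow> bool" where
  "m_separated V D B x y Z \<longleftrightarrow>
     \<not> (\<exists>ps. hd ps = x \<and> last ps = y \<and> m_connecting V D B Z ps)"

definition maximal :: "'a set \<Rightarrow> ('a \<times> 'a) set \<Rightarrow> ('a \<times> 'a) set \<Rightarrow> bool" where
  "maximal V D B \<longleftrightarrow> (\<forall>x\<in>V. \<forall>y\<in>V. x \<noteq> y \<and> \<not> adjacent D B x y \<longrightarrow>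
       (\<exists>Z. Z \<subseteq> V - {x, y} \<and> m_separated V D B x y Z))"

definition MAG :: "'a set \<Rightarrow> ('a \<times> 'a) set \<Rightarrow> ('a \<times> 'a) set \<Rightarrow> bool" where
  "MAG V D B \<longleftrightarrow> mixed_graph V D B \<and> acyclic_dir D \<and> ancestral V D B \<and> maximal V D B"

definition barren :: "('a \<times> 'a) set \<Rightarrow> 'a set \<Rightarrow> 'a set" where
  "barren D W = {w\<in>W. de D w \<inter> W = {w}}"

definition Bind :: "('a \<times> 'a) set \<Rightarrow> 'a set \<Rightarrow> ('a \<times> 'a) set" where
  "Bind B A = B \<inter> (A \<times> A)"

definition dis :: "('a \<times> 'a) set \<Rightarrow> 'a set \<Rightarrow> 'a set \<Rightarrow> 'a set" where
  "dis B A H = {v\<in>A. \<exists>h\<in>H. (h, v) \<in> (Bind B A)\<^sup>*}"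

definition is_head :: "'a set \<Rightarrow> ('a \<times> 'a) set \<Rightarrow> ('a \<times> 'a) set \<Rightarrow> 'a set \<Rightarrow> bool" where
  "is_head V D B H \<longleftrightarrow> H \<noteq> {} \<and> H \<subseteq> V \<and> barren D H = H
     \<and> (\<forall>h\<in>H. \<forall>h'\<in>H. (h, h') \<in> (Bind B (anS D H))\<^sup>*)"

definition tail :: "('a \<times> 'a) set \<Rightarrow> ('a \<times> 'a) set \<Rightarrow> 'a set \<Rightarrow> 'a set" where
  "tail D B H = (dis B (anS D H) H - H) \<union> paS D (dis B (anS D H) H)"

definition simple_MAG :: "'a set \<Rightarrow> ('a \<times> 'a) set \<Rightarrow> ('a \<times> 'a) set \<Rightarrow> bool" where
  "simple_MAG V D B \<longleftrightarrow> MAG V D B \<and> (\<forall>H. is_head V D B H \<longrightarrow> card H \<le> 2)"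

definition topo_order :: "'a set \<Rightarrow> ('a \<times> 'a) set \<Rightarrow> ('a \<Rightarrow> nat) \<Rightarrow> bool" where
  "topo_order V D ord \<longleftrightarrow> inj_on ord V
     \<and> (\<forall>u\<in>V. \<forall>v\<in>V. u \<in> an D v \<and> u \<noteq> v \<longrightarrow> ord u < ord v)"

end

theory Submission
  imports Defs
begin

lemma anS_mono: "H \<subseteq> H' \<Longrightarrow> anS D H \<subseteq> anS D H'"
  unfolding anS_def by blast

lemma Bind_mono: "A \<subseteq> A' \<Longrightarrow> Bind B A \<subseteq> Bind B A'"
  unfolding Bind_def by blast

lemma conn_mono: "A \<subseteq> A' \<Longrightarrow> (h, h') \<in> (Bind B A)\<^sup>* \<Longrightarrow> (h, h') \<in> (Bind B A')\<^sup>*"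
  using rtrancl_mono[OF Bind_mono] by blast

lemma head2_facts:
  assumes "is_head V D B {i, j}" "j \<noteq> i"
  shows "(i, j) \<notin> D\<^sup>*" "(j, i) \<notin> D\<^sup>*" "i \<in> V" "j \<in> V"
    "(i, j) \<in> (Bind B (anS D {i, j}))\<^sup>*" "(j, i) \<in> (Bind B (anS D {i, j}))\<^sup>*"
proof -
  have b: "barren D {i, j} = {i, j}" using assms(1) unfolding is_head_def by blast
  have "i \<in> barren D {i, j}" using b by blast
  then have "de D i \<inter> {i, j} = {i}" unfolding barren_def by blast
  then show "(i, j) \<notin> D\<^sup>*" using assms(2) unfolding de_def by (metis IntI insertI1 insertI2 mem_Collect_eq singletonD)
  have "j \<in> barren D {i, j}" using b by blast
  then have "de D j \<inter> {i, j} = {j}" unfolding barren_def by blast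
  then show "(j, i) \<notin> D\<^sup>*" using assms(2) unfolding de_def by (metis IntI insertI1 mem_Collect_eq singletonD)
  show "i \<in> V" "j \<in> V" using assms(1) unfolding is_head_def by blast+
  show "(i, j) \<in> (Bind B (anS D {i, j}))\<^sup>*" "(j, i) \<in> (Bind B (anS D {i, j}))\<^sup>*"
    using assms(1) unfolding is_head_def by blast+
qed

theorem lemma3p14:
  fixes V :: "'a set" and D B :: "('a \<times> 'a) set" and ord :: "'a \<Rightarrow> nat" and i :: 'a
  assumes "simple_MAG V D B"
    and "topo_order V D ord"
    and "i \<in> V"
  shows "pa D i = tail D B {i}
    \<and> (\<forall>j. j \<noteq> i \<and> is_head V D B {i, j} \<and> ord j < ord i \<longrightarrow> tail D B {i} \<subseteq> tail D B {i, j})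
    \<and> (\<forall>j j'. j \<noteq> i \<and> j' \<noteq> i \<and> is_head V D B {i, j} \<and> is_head V D B {i, j'}
              \<and> ord j < ord j' \<and> ord j' < ord i \<longrightarrow> tail D B {i, j} \<subseteq> tail D B {i, j'})"
proof (intro conjI allI impI)
  have mg: "mixed_graph V D B" and anc: "ancestral V D B"
    using assms(1) unfolding simple_MAG_def MAG_def by blast+
  have symB: "sym B" using mg unfolding mixed_graph_def by blast
  have ai: "anS D {i} = an D i" unfolding anS_def by simp
  have dis1: "dis B (anS D {i}) {i} = {i}"
  proof
    show "{i} \<subseteq> dis B (anS D {i}) {i}" unfolding dis_def ai an_def by auto
    show "dis B (anS D {i}) {i} \<subseteq> {i}"
    proof
      fix v assume "v \<in> dis B (anS D {i}) {i}"
      then have "(i, v) \<in> (Bind B (an D i))\<^sup>*" unfolding dis_def ai by blast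
      then show "v \<in> {i}"
      proof (induction rule: rtrancl_induct)
        case base then show ?case by simp
      next
        case (step y z)
        then have "y = i" by simp
        with step have "(i, z) \<in> B" "z \<in> an D i" unfolding Bind_def by auto
        then have "z \<in> sib B i \<inter> an D i" using symB unfolding sib_def
          by (metis IntI mem_Collect_eq symD)
        then show ?case using anc assms(3) unfolding ancestral_def by blast
      qed
    qed
  qed
  show "pa D i = tail D B {i}" unfolding tail_def dis1 paS_def by simp
  fix j
  assume h: "j \<noteq> i \<and> is_head V D B {i, j} \<and> ord j < ord i"
  have "i \<in> dis B (anS D {i, j}) {i, j}"
    unfolding dis_def anS_def an_def by auto
  then show "tail D B {i} \<subseteq> tail D B {i, j}"
    unfolding tail_def dis1 paS_def by auto
next
  fix j j'
  assume h: "j \<noteq> i \<and> j' \<noteq> i \<and> is_head V D B {i, j} \<and> is_head V D B {i, j'}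
              \<and> ord j < ord j' \<and> ord j' < ord i"
  then have hj: "is_head V D B {i, j}" and hj': "is_head V D B {i, j'}"
    and ne: "j \<noteq> i" "j' \<noteq> i" and o: "ord j < ord j'" by auto
  note fj = head2_facts[OF hj ne(1)]
  note fj' = head2_facts[OF hj' ne(2)]
  have jj: "j \<noteq> j'" using o by auto
  have topo: "\<And>u v. u \<in> V \<Longrightarrow> v \<in> V \<Longrightarrow> (u, v) \<in> D\<^sup>* \<Longrightarrow> u \<noteq> v \<Longrightarrow> ord u < ord v"
    using assms(2) unfolding topo_order_def an_def by blast
  have nj'j: "(j', j) \<notin> D\<^sup>*" using topo[OF fj'(4) fj(4)] o jj by fastforce
  have jj': "(j, j') \<in> D\<^sup>*"
  proof (rule ccontr)
    assume nc: "(j, j') \<notin> D\<^sup>*"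
    let ?H = "{i, j, j'}"
    have sub1: "anS D {i, j} \<subseteq> anS D ?H" and sub2: "anS D {i, j'} \<subseteq> anS D ?H"
      by (rule anS_mono, blast)+
    have c1: "(i, j) \<in> (Bind B (anS D ?H))\<^sup>*" "(j, i) \<in> (Bind B (anS D ?H))\<^sup>*"
      using conn_mono[OF sub1] fj(5,6) by blast+
    have c2: "(i, j') \<in> (Bind B (anS D ?H))\<^sup>*" "(j', i) \<in> (Bind B (anS D ?H))\<^sup>*"
      using conn_mono[OF sub2] fj'(5,6) by blast+
    have conn: "\<forall>h\<in>?H. \<forall>h'\<in>?H. (h, h') \<in> (Bind B (anS D ?H))\<^sup>*"
      using c1 c2 by (auto intro: rtrancl_trans)
    have bar: "barren D ?H = ?H"
      unfolding barren_def de_def using fj(1,2) fj'(1,2) nc nj'j by auto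
    have "is_head V D B ?H"
      unfolding is_head_def using conn bar fj(3,4) fj'(4) by auto
    then have "card ?H \<le> 2" using assms(1) unfolding simple_MAG_def by blast
    moreover have "card ?H = 3" using ne jj by simp
    ultimately show False by simp
  qed
  have anSsub: "anS D {i, j} \<subseteq> anS D {i, j'}"
    unfolding anS_def an_def using jj' by (auto intro: rtrancl_trans)
  have dsub: "dis B (anS D {i, j}) {i, j} \<subseteq> dis B (anS D {i, j'}) {i, j'}"
  proof
    fix v assume "v \<in> dis B (anS D {i, j}) {i, j}"
    then obtain h where v: "v \<in> anS D {i, j}" "h \<in> {i, j}" "(h, v) \<in> (Bind B (anS D {i, j}))\<^sup>*"
      unfolding dis_def by blast
    have "(i, v) \<in> (Bind B (anS D {i, j}))\<^sup>*"
      using v(2,3) fj(5) by (auto intro: rtrancl_trans)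
    then have "(i, v) \<in> (Bind B (anS D {i, j'}))\<^sup>*" using conn_mono[OF anSsub] by blast
    then show "v \<in> dis B (anS D {i, j'}) {i, j'}" unfolding dis_def using v(1) anSsub by blast
  qed
  have j'notin: "j' \<notin> anS D {i, j}"
    unfolding anS_def an_def using fj'(2) nj'j by auto
  have "j' \<notin> dis B (anS D {i, j}) {i, j}" using j'notin unfolding dis_def by blast
  then show "tail D B {i, j} \<subseteq> tail D B {i, j'}"
    unfolding tail_def paS_def using dsub by blast
qed

end
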